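(* Let $V$ be a finite dimensional real or complex vector space with $\dim V=n$, let $B:V\to V$ be an invertible linear map, let $v_1,\dots,v_k\in V$ and $p_1,\dots,p_k\in V^*$, and let $$B'=B+\sum_{i=1}^{k}v_i\otimes p_i .$$ Put $u_i=B^{-1}v_i$ for $i=1,\dots,k$ and $A=\mathrm{id}_V+\sum_{i=1}^{k}u_i\otimes p_i$. If $\det A\neq 0$, then $B'$ is invertible and $$(B')^{-1}=\frac{1}{\det A}B^{-1}+\frac{1}{\det A}\left(\sum_{i=1}^{\min(n-1,k)}\ \sum_{1\le j_1<\dots<j_i\le k}(u_{j_1},p_{j_1})\,\square\,\cdots\,\square\,(u_{j_i},p_{j_i})\right)B^{-1}.$$
   Context: For $v\in V$ and $p\in V^*$, $v\otimes p$ denotes the linear map $V\to V$, $x\mapsto p(x)\,v$. For covectors $q_1,\dots,q_m\in V^*$ and vectors $w_1,\dots,w_m\in V$, $(q_1\wedge\dots\wedge q_m)(w_1,\dots,w_m)=\det\bigl[q_a(w_b)\bigr]_{a,b=1}^{m}$. For $\dim V=n\ge 2$, $1\le i\le n-1$, vectors $z_1,\dots,z_i\in V$ and covectors $p_1,\dots,p_i\in V^*$, the operator $(z_1,p_1)\,\square\,\cdots\,\square\,(z_i,p_i):V\to V$ is the unique linear map $T$ such that $q(Tv)=(q\wedge p_1\wedge\dots\wedge p_i)(v,z_1,\dots,z_i)$ for all $v\in V$, $q\in V^*$. Empty sums are zero. *)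

theory Defs
  imports "HOL-Analysis.Analysis" "HOL-Combinatorics.Permutations"
begin

text \<open>V = 'k^'n (dimension n = CARD('n)); covectors are also represented by
  elements of 'k^'n via the pairing below; linear maps V \<rightarrow> V are matrices
  'k^'n^'n acting by *v.\<close>

definition pairing :: "'k::field^'n \<Rightarrow> 'k^'n \<Rightarrow> 'k" where
  "pairing p x = (\<Sum>i\<in>UNIV. p $ i * x $ i)"

definition outer :: "'k::field^'n \<Rightarrow> 'k^'n \<Rightarrow> 'k^'n^'n" where
  "outer v p = (\<chi> r c. v $ r * p $ c)"

definition det_nat :: "nat \<Rightarrow> (nat \<Rightarrow> nat \<Rightarrow> 'k::field) \<Rightarrow> 'k" where
  "det_nat m M = (\<Sum>\<sigma> | \<sigma> permutes {..<m}. of_int (sign \<sigma>) * (\<Prod>a<m. M a (\<sigma> a)))"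

text \<open>(q_1 \<and> ... \<and> q_m)(w_1,...,w_m) = det [q_a(w_b)]\<close>
definition wedge_eval :: "('k::field^'n) list \<Rightarrow> ('k^'n) list \<Rightarrow> 'k" where
  "wedge_eval qs ws = det_nat (length qs) (\<lambda>a b. pairing (qs ! a) (ws ! b))"

text \<open>(z_1,p_1) \<box> ... \<box> (z_i,p_i): the linear map T with
  q(T v) = (q \<and> p_1 \<and> ... \<and> p_i)(v, z_1, ..., z_i); its matrix entry (r,c)
  is obtained with q = e_r, v = e_c.\<close>
definition box :: "(('k::field^'n) \<times> ('k^'n)) list \<Rightarrow> 'k^'n^'n" where
  "box zps = (\<chi> r c. wedge_eval (axis r 1 # map snd zps) (axis c 1 # map fst zps))"

end

theory Submission
  imports Defs
begin

definition detS :: "'a set \<Rightarrow> ('a \<Rightarrow> 'a \<Rightarrow> 'k::comm_ring_1) \<Rightarrow> 'k" where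
  "detS S M = (\<Sum>\<sigma> | \<sigma> permutes S. of_int (sign \<sigma>) * (\<Prod>a\<in>S. M a (\<sigma> a)))"

lemma det_nat_detS: "det_nat m M = detS {..<m} M"
  by (simp add: det_nat_def detS_def)

lemma detS_cong:
  assumes "\<And>a b. a \<in> S \<Longrightarrow> b \<in> S \<Longrightarrow> M a b = N a b"
  shows "detS S M = detS S N"
  unfolding detS_def
  by (intro sum.cong refl arg_cong[where f="\<lambda>x. _ * x"] prod.cong)
     (auto simp: assms permutes_in_image)

lemma detS_reindex:
  assumes h: "bij_betw h A B" and fin: "finite A"
  shows "detS B M = detS A (\<lambda>a b. M (h a) (h b))"
proof -
  have inj: "inj_on h A" using h by (simp add: bij_betw_def)
  have hi: "bij_betw (inv_into A h) B A" using h by (rule bij_betw_inv_into)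
  show ?thesis
  unfolding detS_def
  proof (rule sym, rule sum.reindex_bij_witness[where j="map_permutation A h" and i="map_permutation B (inv_into A h)"])
    fix \<sigma> assume s: "\<sigma> \<in> {\<sigma>. \<sigma> permutes A}"
    show "map_permutation B (inv_into A h) (map_permutation A h \<sigma>) = \<sigma>"
      by (rule map_permutation_compose_inv) (use h s inj in \<open>auto simp: inv_into_f_f\<close>)
    show "map_permutation A h \<sigma> \<in> {\<sigma>. \<sigma> permutes B}"
      using map_permutation_permutes[OF h] s by auto
    have "(\<Prod>y\<in>B. M y (map_permutation A h \<sigma> y)) = (\<Prod>a\<in>A. M (h a) (map_permutation A h \<sigma> (h a)))"
      by (rule prod.reindex_bij_betw[OF h, symmetric])
    also have "\<dots> = (\<Prod>a\<in>A. M (h a) (h (\<sigma> a)))"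
      by (intro prod.cong refl) (simp add: map_permutation_apply[OF inj])
    finally show "of_int (sign (map_permutation A h \<sigma>)) * (\<Prod>y\<in>B. M y (map_permutation A h \<sigma> y)) =
        of_int (sign \<sigma>) * (\<Prod>a\<in>A. M (h a) (h (\<sigma> a)))"
      using sign_map_permutation[OF inj _ fin, of \<sigma>] s by simp
  next
    fix \<tau> assume t: "\<tau> \<in> {\<sigma>. \<sigma> permutes B}"
    show "map_permutation A h (map_permutation B (inv_into A h) \<tau>) = \<tau>"
      by (rule map_permutation_compose_inv) (use hi t h in \<open>auto simp: bij_betw_inv_into_right\<close>)
    show "map_permutation B (inv_into A h) \<tau> \<in> {\<sigma>. \<sigma> permutes A}"
      using map_permutation_permutes[OF hi] t by auto
  qed
qed

lemma detS_transpose: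
  assumes fin: "finite S"
  shows "detS S (\<lambda>a b. M b a) = detS S M"
  unfolding detS_def
proof (rule sum.reindex_bij_witness[where i=inv and j=inv])
  fix \<sigma> assume s: "\<sigma> \<in> {\<sigma>. \<sigma> permutes S}"
  then have sp: "\<sigma> permutes S" by simp
  show "inv (inv \<sigma>) = \<sigma>" using sp by (simp add: permutes_inv_inv)
  show "inv \<sigma> \<in> {\<sigma>. \<sigma> permutes S}" using sp by (simp add: permutes_inv)
  have "(\<Prod>a\<in>S. M (\<sigma> a) a) = (\<Prod>a\<in>S. M (\<sigma> a) (inv \<sigma> (\<sigma> a)))"
    using sp by (simp add: permutes_inverses)
  also have "\<dots> = (\<Prod>b\<in>S. M b (inv \<sigma> b))"
    using prod.reindex_bij_betw[OF permutes_imp_bij[OF sp], of "\<lambda>b. M b (inv \<sigma> b)"] by simp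
  finally show "of_int (sign (inv \<sigma>)) * (\<Prod>a\<in>S. M a (inv \<sigma> a)) = of_int (sign \<sigma>) * (\<Prod>a\<in>S. M (\<sigma> a) a)"
    using sign_inverse[OF permutes_imp_permutation[OF fin sp]] by simp
qed (auto simp: permutes_inv_inv permutes_inv)

lemma detS_eq_rows:
  fixes M :: "'a \<Rightarrow> 'a \<Rightarrow> 'k::field_char_0"
  assumes fin: "finite S" and a: "a \<in> S" "a' \<in> S" "a \<noteq> a'"
    and eq: "\<And>b. b \<in> S \<Longrightarrow> M a b = M a' b"
  shows "detS S M = 0"
proof -
  let ?t = "Transposition.transpose a a'"
  have tp: "?t permutes S" using a by (simp add: permutes_swap_id)
  have "detS S M = - detS S M"
    unfolding detS_def sum_negf[symmetric]
  proof (rule sum.reindex_bij_witness[where i="\<lambda>\<sigma>. \<sigma> \<circ> ?t" and j="\<lambda>\<sigma>. \<sigma> \<circ> ?t"])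
    fix \<sigma> assume s: "\<sigma> \<in> {\<sigma>. \<sigma> permutes S}"
    then have sp: "\<sigma> permutes S" by simp
    show "\<sigma> \<circ> ?t \<circ> ?t = \<sigma>" by (simp add: fun_eq_iff)
    show "\<sigma> \<circ> ?t \<in> {\<sigma>. \<sigma> permutes S}" using permutes_compose[OF tp sp] by simp
    have "(\<Prod>x\<in>S. M x ((\<sigma> \<circ> ?t) x)) = (\<Prod>x\<in>S. M (?t (?t x)) (\<sigma> (?t x)))"
      by simp
    also have "\<dots> = (\<Prod>y\<in>S. M (?t y) (\<sigma> y))"
      using prod.reindex_bij_betw[OF permutes_imp_bij[OF tp], of "\<lambda>y. M (?t y) (\<sigma> y)"] by simp
    also have "\<dots> = (\<Prod>y\<in>S. M y (\<sigma> y))"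
    proof (intro prod.cong refl)
      fix y assume y: "y \<in> S"
      have "\<sigma> y \<in> S" using sp y by (simp add: permutes_in_image)
      then show "M (?t y) (\<sigma> y) = M y (\<sigma> y)"
        using eq by (auto simp: Transposition.transpose_def)
    qed
    finally have P: "(\<Prod>x\<in>S. M x ((\<sigma> \<circ> ?t) x)) = (\<Prod>y\<in>S. M y (\<sigma> y))" .
    have "sign (\<sigma> \<circ> ?t) = sign \<sigma> * sign ?t"
      by (rule sign_compose) (use fin sp tp in \<open>auto intro: permutes_imp_permutation\<close>)
    then have "sign (\<sigma> \<circ> ?t) = - sign \<sigma>" using a by (simp add: sign_swap_id)
    then show "- (of_int (sign (\<sigma> \<circ> ?t)) * (\<Prod>x\<in>S. M x ((\<sigma> \<circ> ?t) x))) = of_int (sign \<sigma>) * (\<Prod>a\<in>S. M a (\<sigma> a))"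
      using P by simp
  qed (auto simp: fun_eq_iff intro: permutes_compose[OF tp])
  then show ?thesis by simp
qed

lemma detS_expand_rows:
  assumes fin: "finite S" "finite R"
  shows "detS S (\<lambda>a b. \<Sum>r\<in>R. c a r * N r b) =
    (\<Sum>g\<in>S \<rightarrow>\<^sub>E R. (\<Prod>a\<in>S. c a (g a)) * detS S (\<lambda>a b. N (g a) b))"
proof -
  have "detS S (\<lambda>a b. \<Sum>r\<in>R. c a r * N r b) =
     (\<Sum>\<sigma> | \<sigma> permutes S. \<Sum>g\<in>S \<rightarrow>\<^sub>E R. of_int (sign \<sigma>) * ((\<Prod>a\<in>S. c a (g a)) * (\<Prod>a\<in>S. N (g a) (\<sigma> a))))"
    unfolding detS_def
    by (intro sum.cong refl) (simp add: prod_sum_PiE[OF fin(1)] fin(2) sum_distrib_left prod.distrib)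
  also have "\<dots> = (\<Sum>g\<in>S \<rightarrow>\<^sub>E R. \<Sum>\<sigma> | \<sigma> permutes S. (\<Prod>a\<in>S. c a (g a)) * (of_int (sign \<sigma>) * (\<Prod>a\<in>S. N (g a) (\<sigma> a))))"
    by (subst sum.swap) (simp add: algebra_simps)
  also have "\<dots> = (\<Sum>g\<in>S \<rightarrow>\<^sub>E R. (\<Prod>a\<in>S. c a (g a)) * detS S (\<lambda>a b. N (g a) b))"
    by (simp add: detS_def sum_distrib_left)
  finally show ?thesis .
qed

lemma det_unit_rows:
  fixes M :: "'k::comm_ring_1^'n^'n"
  assumes unit: "\<And>c. c \<notin> S \<Longrightarrow> M $ c = axis c 1"
  shows "det M = detS S (\<lambda>c d. M $ c $ d)"
proof -
  have "det M = (\<Sum>\<sigma> | \<sigma> permutes (UNIV::'n set). of_int (sign \<sigma>) * (\<Prod>c\<in>UNIV. M$c$\<sigma> c))"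
    by (simp add: det_def)
  also have "\<dots> = (\<Sum>\<sigma> | \<sigma> permutes S. of_int (sign \<sigma>) * (\<Prod>c\<in>UNIV. M$c$\<sigma> c))"
  proof (rule sum.mono_neutral_right)
    show "finite {\<sigma>. \<sigma> permutes (UNIV::'n set)}" by (simp add: finite_permutations)
    show "{\<sigma>. \<sigma> permutes S} \<subseteq> {\<sigma>. \<sigma> permutes (UNIV::'n set)}"
      by (auto intro: permutes_subset)
    show "\<forall>\<sigma>\<in>{\<sigma>. \<sigma> permutes UNIV} - {\<sigma>. \<sigma> permutes S}. of_int (sign \<sigma>) * (\<Prod>c\<in>UNIV. M$c$\<sigma> c) = 0"
    proof
      fix \<sigma> assume s: "\<sigma> \<in> {\<sigma>. \<sigma> permutes (UNIV::'n set)} - {\<sigma>. \<sigma> permutes S}"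
      then obtain c where c: "c \<notin> S" "\<sigma> c \<noteq> c"
        unfolding permutes_def by auto
      have "M$c$\<sigma> c = 0" using unit[OF c(1)] c(2) by (simp add: axis_def)
      then have "(\<Prod>c\<in>UNIV. M$c$\<sigma> c) = 0" by (intro prod_zero) auto
      then show "of_int (sign \<sigma>) * (\<Prod>c\<in>UNIV. M$c$\<sigma> c) = 0" by simp
    qed
  qed
  also have "\<dots> = detS S (\<lambda>c d. M $ c $ d)"
    unfolding detS_def
  proof (intro sum.cong refl arg_cong[where f="\<lambda>x. _ * x"])
    fix \<sigma> assume "\<sigma> \<in> {\<sigma>. \<sigma> permutes S}"
    then have sp: "\<sigma> permutes S" by simp
    show "(\<Prod>c\<in>UNIV. M$c$\<sigma> c) = (\<Prod>c\<in>S. M$c$\<sigma> c)"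
      by (rule prod.mono_neutral_right) (auto simp: unit permutes_not_in[OF sp] axis_def)
  qed
  finally show ?thesis .
qed

lemma finite_funs_opt: "finite {f::'n::finite \<Rightarrow> 'b. \<forall>c. f c \<in> X}" if "finite X"
proof -
  have "{f::'n \<Rightarrow> 'b. \<forall>c. f c \<in> X} = PiE UNIV (\<lambda>_. X)"
    by (auto simp: PiE_def Pi_def)
  then show ?thesis using that by (simp add: finite_PiE)
qed

lemma det_rows_sum_gen:
  fixes a :: "'n::finite \<Rightarrow> 'b \<Rightarrow> 'k::comm_ring_1^'n"
  assumes fX: "finite X"
  shows "det (\<chi> c. \<Sum>x\<in>X. a c x) = (\<Sum>f\<in>{f. \<forall>c. f c \<in> X}. det (\<chi> c. a c (f c)))"
proof -
  have E: "{f::'n \<Rightarrow> 'b. \<forall>c. f c \<in> X} = PiE UNIV (\<lambda>_. X)"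
    by (auto simp: PiE_def Pi_def)
  have "det (\<chi> c. \<Sum>x\<in>X. a c x) = (\<Sum>\<sigma> | \<sigma> permutes (UNIV::'n set). \<Sum>f\<in>PiE UNIV (\<lambda>_. X).
      of_int (sign \<sigma>) * (\<Prod>c\<in>UNIV. a c (f c) $ \<sigma> c))"
    unfolding det_def
    by (intro sum.cong refl) (simp add: sum_component prod_sum_PiE fX sum_distrib_left)
  also have "\<dots> = (\<Sum>f\<in>PiE UNIV (\<lambda>_. X). det (\<chi> c. a c (f c)))"
    by (subst sum.swap) (simp add: det_def)
  finally show ?thesis unfolding E .
qed

lemma det_side:
  fixes u p :: "nat \<Rightarrow> 'k::field_char_0^'n"
  assumes finK: "finite K"
  shows "det (mat 1 + (\<Sum>i\<in>K. outer (u i) (p i))) =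
    (\<Sum>f\<in>{f::'n\<Rightarrow>nat option. (\<forall>c. f c \<in> insert None (Some ` K)) \<and> inj_on f {c. f c \<noteq> None}}.
        (\<Prod>c\<in>{c. f c \<noteq> None}. p (the (f c)) $ c) * detS {c. f c \<noteq> None} (\<lambda>c d. u (the (f c)) $ d))"
proof -
  define X where "X = insert None (Some ` K)"
  define a where "a = (\<lambda>c x. case x of None \<Rightarrow> axis c 1 | Some i \<Rightarrow> (p i $ c) *s u i)"
  have finX: "finite X" using finK by (simp add: X_def)
  have T: "transpose (mat 1 + (\<Sum>i\<in>K. outer (u i) (p i))) = (\<chi> c. \<Sum>x\<in>X. a c x)"
  proof -
    have "(\<Sum>x\<in>X. a c x) = axis c 1 + (\<Sum>i\<in>K. (p i $ c) *s u i)" for c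
      unfolding X_def using finK
      by (simp add: sum.reindex a_def)
    then show ?thesis
      by (simp add: vec_eq_iff transpose_def sum_component outer_def mat_def axis_def mult.commute)
  qed
  have "det (mat 1 + (\<Sum>i\<in>K. outer (u i) (p i))) = det (\<chi> c. \<Sum>x\<in>X. a c x)"
    by (metis T det_transpose)
  also have "\<dots> = (\<Sum>f\<in>{f. \<forall>c. f c \<in> X}. det (\<chi> c. a c (f c)))"
    by (rule det_rows_sum_gen[OF finX])
  also have "\<dots> = (\<Sum>f\<in>{f. \<forall>c. f c \<in> X}.
        (\<Prod>c\<in>{c. f c \<noteq> None}. p (the (f c)) $ c) * detS {c. f c \<noteq> None} (\<lambda>c d. u (the (f c)) $ d))"
  proof (rule sum.cong[OF refl])
    fix f :: "'n \<Rightarrow> nat option"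
    let ?co = "\<lambda>c. case f c of None \<Rightarrow> 1 | Some i \<Rightarrow> p i $ c"
    let ?ro = "\<lambda>c. case f c of None \<Rightarrow> axis c 1 | Some i \<Rightarrow> u i"
    have "(\<chi> c. a c (f c)) = (\<chi> c. ?co c *s ?ro c)"
      by (simp add: vec_eq_iff a_def split: option.split)
    then have "det (\<chi> c. a c (f c)) = (\<Prod>c\<in>UNIV. ?co c) * det (\<chi> c. ?ro c)"
      by (simp add: det_rows_mul)
    also have "(\<Prod>c\<in>UNIV. ?co c) = (\<Prod>c\<in>{c. f c \<noteq> None}. p (the (f c)) $ c)"
      by (rule trans[OF prod.mono_neutral_right[of UNIV "{c. f c \<noteq> None}"]]) 
         (auto intro!: prod.cong split: option.split)
    also have "det (\<chi> c. ?ro c) = detS {c. f c \<noteq> None} (\<lambda>c d. (\<chi> c. ?ro c) $ c $ d)"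
      by (rule det_unit_rows) auto
    also have "\<dots> = detS {c. f c \<noteq> None} (\<lambda>c d. u (the (f c)) $ d)"
      by (rule detS_cong) auto
    finally show "det (\<chi> c. a c (f c)) = (\<Prod>c\<in>{c. f c \<noteq> None}. p (the (f c)) $ c) * detS {c. f c \<noteq> None} (\<lambda>c d. u (the (f c)) $ d)" .
  qed
  also have "\<dots> = (\<Sum>f\<in>{f::'n\<Rightarrow>nat option. (\<forall>c. f c \<in> X) \<and> inj_on f {c. f c \<noteq> None}}.
        (\<Prod>c\<in>{c. f c \<noteq> None}. p (the (f c)) $ c) * detS {c. f c \<noteq> None} (\<lambda>c d. u (the (f c)) $ d))"
  proof (rule sum.mono_neutral_right)
    show "finite {f::'n\<Rightarrow>nat option. \<forall>c. f c \<in> X}" using finite_funs_opt[OF finX, where 'n='n] by simp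
  next
    show "\<forall>f\<in>{f::'n\<Rightarrow>nat option. \<forall>c. f c \<in> X} - {f. (\<forall>c. f c \<in> X) \<and> inj_on f {c. f c \<noteq> None}}.
       (\<Prod>c\<in>{c. f c \<noteq> None}. p (the (f c)) $ c) * detS {c. f c \<noteq> None} (\<lambda>c d. u (the (f c)) $ d) = 0"
    proof
      fix f :: "'n \<Rightarrow> nat option" assume "f \<in> {f. \<forall>c. f c \<in> X} - {f. (\<forall>c. f c \<in> X) \<and> inj_on f {c. f c \<noteq> None}}"
      then obtain c c' where cc: "f c \<noteq> None" "f c' \<noteq> None" "c \<noteq> c'" "f c = f c'"
        unfolding inj_on_def by auto
      have "detS {c. f c \<noteq> None} (\<lambda>c d. u (the (f c)) $ d) = 0"
        by (rule detS_eq_rows[of _ c c']) (use cc in auto)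
      then show "(\<Prod>c\<in>{c. f c \<noteq> None}. p (the (f c)) $ c) * detS {c. f c \<noteq> None} (\<lambda>c d. u (the (f c)) $ d) = 0"
        by simp
    qed
  qed auto
  finally show ?thesis unfolding X_def .
qed

lemma D_side:
  fixes u p :: "nat \<Rightarrow> 'k::field_char_0^'n"
  assumes finK: "finite K"
  shows "(\<Sum>J\<in>Pow K. detS J (\<lambda>a b. pairing (p a) (u b))) =
    (\<Sum>(J,g)\<in>Sigma (Pow K) (\<lambda>J. {g\<in>J \<rightarrow>\<^sub>E (UNIV::'n set). inj_on g J}). (\<Prod>a\<in>J. p a $ g a) * detS J (\<lambda>a b. u a $ g b))"
proof -
  have "detS J (\<lambda>a b. pairing (p a) (u b)) = (\<Sum>g\<in>{g\<in>J \<rightarrow>\<^sub>E (UNIV::'n set). inj_on g J}. (\<Prod>a\<in>J. p a $ g a) * detS J (\<lambda>a b. u a $ g b))"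
    if J: "J \<in> Pow K" for J
  proof -
    have fJ: "finite J" using J finK finite_subset by auto
    have "detS J (\<lambda>a b. pairing (p a) (u b)) = detS J (\<lambda>a b. \<Sum>r\<in>UNIV. p a $ r * u b $ r)"
      by (simp add: pairing_def)
    also have "\<dots> = (\<Sum>g\<in>J \<rightarrow>\<^sub>E (UNIV::'n set). (\<Prod>a\<in>J. p a $ g a) * detS J (\<lambda>a b. u b $ g a))"
      by (rule detS_expand_rows[OF fJ finite])
    also have "\<dots> = (\<Sum>g\<in>{g\<in>J \<rightarrow>\<^sub>E (UNIV::'n set). inj_on g J}. (\<Prod>a\<in>J. p a $ g a) * detS J (\<lambda>a b. u b $ g a))"
    proof (rule sum.mono_neutral_right)
      show "finite (J \<rightarrow>\<^sub>E (UNIV::'n set))" using fJ by (simp add: finite_PiE)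
      show "\<forall>g\<in>(J \<rightarrow>\<^sub>E (UNIV::'n set)) - {g\<in>J \<rightarrow>\<^sub>E (UNIV::'n set). inj_on g J}. (\<Prod>a\<in>J. p a $ g a) * detS J (\<lambda>a b. u b $ g a) = 0"
      proof
        fix g :: "nat \<Rightarrow> 'n" assume "g \<in> (J \<rightarrow>\<^sub>E (UNIV::'n set)) - {g\<in>J \<rightarrow>\<^sub>E (UNIV::'n set). inj_on g J}"
        then obtain a a' where aa: "a \<in> J" "a' \<in> J" "a \<noteq> a'" "g a = g a'"
          unfolding inj_on_def by auto
        have "detS J (\<lambda>a b. u b $ g a) = 0"
          by (rule detS_eq_rows[OF fJ aa(1,2,3)]) (simp add: aa(4))
        then show "(\<Prod>a\<in>J. p a $ g a) * detS J (\<lambda>a b. u b $ g a) = 0" by simp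
      qed
    qed auto
    also have "\<dots> = (\<Sum>g\<in>{g\<in>J \<rightarrow>\<^sub>E (UNIV::'n set). inj_on g J}. (\<Prod>a\<in>J. p a $ g a) * detS J (\<lambda>a b. u a $ g b))"
      by (intro sum.cong refl) (simp add: detS_transpose[OF fJ, of "\<lambda>a b. u a $ _ b"])
    finally show ?thesis .
  qed
  then have "(\<Sum>J\<in>Pow K. detS J (\<lambda>a b. pairing (p a) (u b))) =
     (\<Sum>J\<in>Pow K. \<Sum>g\<in>{g\<in>J \<rightarrow>\<^sub>E (UNIV::'n set). inj_on g J}. (\<Prod>a\<in>J. p a $ g a) * detS J (\<lambda>a b. u a $ g b))"
    by (intro sum.cong refl) auto
  also have "\<dots> = (\<Sum>(J,g)\<in>Sigma (Pow K) (\<lambda>J. {g\<in>J \<rightarrow>\<^sub>E (UNIV::'n set). inj_on g J}). (\<Prod>a\<in>J. p a $ g a) * detS J (\<lambda>a b. u a $ g b))"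
  proof (rule sum.Sigma)
    show "\<forall>J\<in>Pow K. finite {g\<in>J \<rightarrow>\<^sub>E (UNIV::'n set). inj_on g J}"
    proof
      fix J assume "J \<in> Pow K"
      then have "finite J" using finK finite_subset by auto
      then show "finite {g\<in>J \<rightarrow>\<^sub>E (UNIV::'n set). inj_on g J}" by (simp add: finite_PiE)
    qed
  qed (use finK in auto)
  finally show ?thesis .
qed

definition PhiM :: "nat set \<times> (nat \<Rightarrow> 'n) \<Rightarrow> 'n \<Rightarrow> nat option" where
  "PhiM x = (\<lambda>c. if c \<in> snd x ` fst x then Some (inv_into (fst x) (snd x) c) else None)"

definition PsiM :: "('n \<Rightarrow> nat option) \<Rightarrow> nat set \<times> (nat \<Rightarrow> 'n)" where
  "PsiM f = ({i. Some i \<in> range f}, \<lambda>a. if Some a \<in> range f then (THE c. f c = Some a) else undefined)"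

lemma PhiM_simp: "PhiM (J,g) = (\<lambda>c. if c \<in> g ` J then Some (inv_into J g c) else None)"
  by (simp only: PhiM_def fst_conv snd_conv)

lemma match_sums:
  fixes u p :: "nat \<Rightarrow> 'k::field_char_0^'n"
  assumes finK: "finite K"
  shows "(\<Sum>(J,g)\<in>Sigma (Pow K) (\<lambda>J. {g\<in>J \<rightarrow>\<^sub>E (UNIV::'n set). inj_on g J}). (\<Prod>a\<in>J. p a $ g a) * detS J (\<lambda>a b. u a $ g b))
   = (\<Sum>f\<in>{f::'n\<Rightarrow>nat option. (\<forall>c. f c \<in> insert None (Some ` K)) \<and> inj_on f {c. f c \<noteq> None}}.
        (\<Prod>c\<in>{c. f c \<noteq> None}. p (the (f c)) $ c) * detS {c. f c \<noteq> None} (\<lambda>c d. u (the (f c)) $ d))"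
proof (rule sum.reindex_bij_witness[where j=PhiM and i=PsiM])
  fix x assume x: "x \<in> Sigma (Pow K) (\<lambda>J. {g\<in>J \<rightarrow>\<^sub>E (UNIV::'n set). inj_on g J})"
  then obtain J g where xJ: "x = (J,g)" and JK: "J \<subseteq> K" and gP: "g \<in> J \<rightarrow>\<^sub>E UNIV" and ig: "inj_on g J"
    by auto
  define f where "f = (\<lambda>c. if c \<in> g ` J then Some (inv_into J g c) else None)"
  have Px: "PhiM x = f" by (simp only: PhiM_simp xJ f_def)
  have Px': "PhiM (J,g) = f" by (simp only: PhiM_simp f_def)
  have fJ: "finite J" using JK finK finite_subset by auto
  have fg: "f (g a) = Some a" if "a \<in> J" for a
    using that ig by (simp add: f_def inv_into_f_f)
  have rng: "Some i \<in> range f \<longleftrightarrow> i \<in> J" for i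
  proof
    assume "Some i \<in> range f"
    then obtain c where "f c = Some i" by auto
    then show "i \<in> J" by (auto simp: f_def split: if_splits intro: inv_into_into)
  qed (use fg in \<open>metis rangeI\<close>)
  have the_eq: "(THE c. f c = Some a) = g a" if "a \<in> J" for a
  proof (rule the_equality)
    show "f (g a) = Some a" using fg that .
    fix c assume "f c = Some a"
    then have "c \<in> g ` J" "inv_into J g c = a" by (auto simp: f_def split: if_splits)
    then show "c = g a" by (metis f_inv_into_f)
  qed
  show "PsiM (PhiM x) = x"
    unfolding xJ Px' PsiM_def using gP by (auto simp: rng the_eq fun_eq_iff PiE_def extensional_def)
  have S0: "{c. f c \<noteq> None} = g ` J" by (auto simp: f_def)
  have "\<forall>c. f c \<in> insert None (Some ` K)"
    using JK ig by (auto simp: f_def inv_into_f_f)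
  moreover have "inj_on f {c. f c \<noteq> None}"
    unfolding S0 by (rule inj_onI) (auto simp: f_def inv_into_injective)
  ultimately show "PhiM x \<in> {f::'n\<Rightarrow>nat option. (\<forall>c. f c \<in> insert None (Some ` K)) \<and> inj_on f {c. f c \<noteq> None}}"
    unfolding Px by simp
  have bij: "bij_betw g J (g ` J)" using ig by (simp add: bij_betw_def)
  have "(\<Prod>c\<in>{c. f c \<noteq> None}. p (the (f c)) $ c) * detS {c. f c \<noteq> None} (\<lambda>c d. u (the (f c)) $ d)
      = (\<Prod>c\<in>g ` J. p (the (f c)) $ c) * detS (g ` J) (\<lambda>c d. u (the (f c)) $ d)"
    by (simp only: S0)
  also have "\<dots> = (\<Prod>a\<in>J. p a $ g a) * detS J (\<lambda>a b. u a $ g b)"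
    by (simp add: prod.reindex[OF ig] detS_reindex[OF bij fJ] fg cong: detS_cong)
  finally show "(\<Prod>c\<in>{c. PhiM x c \<noteq> None}. p (the (PhiM x c)) $ c) * detS {c. PhiM x c \<noteq> None} (\<lambda>c d. u (the (PhiM x c)) $ d) =
     (case x of (J, g) \<Rightarrow> (\<Prod>a\<in>J. p a $ g a) * detS J (\<lambda>a b. u a $ g b))"
    unfolding Px by (simp add: xJ)
next
  fix f :: "'n \<Rightarrow> nat option"
  assume fF: "f \<in> {f::'n\<Rightarrow>nat option. (\<forall>c. f c \<in> insert None (Some ` K)) \<and> inj_on f {c. f c \<noteq> None}}"
  then have fX: "\<And>c. f c \<in> insert None (Some ` K)" and fi: "inj_on f {c. f c \<noteq> None}" by auto
  define J where "J = {i. Some i \<in> range f}"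
  define g where "g = (\<lambda>a. if Some a \<in> range f then (THE c. f c = Some a) else undefined)"
  have Pf: "PsiM f = (J, g)" by (simp add: PsiM_def J_def g_def)
  have fg: "f (g a) = Some a" if "a \<in> J" for a
  proof -
    from that obtain c where c: "f c = Some a" by (auto simp: J_def)
    have "\<exists>!c. f c = Some a"
    proof (rule ex1I[of _ c])
      show "f c = Some a" by (rule c)
      fix c' assume "f c' = Some a"
      then show "c' = c" using fi c by (auto simp: inj_on_def)
    qed
    then have "f (THE c. f c = Some a) = Some a" by (rule theI')
    then show ?thesis using that by (simp add: g_def J_def)
  qed
  have ig: "inj_on g J"
    by (rule inj_onI) (metis fg option.inject)
  have gJ: "g ` J = {c. f c \<noteq> None}"
  proof
    show "g ` J \<subseteq> {c. f c \<noteq> None}" using fg by auto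
    show "{c. f c \<noteq> None} \<subseteq> g ` J"
    proof
      fix c assume "c \<in> {c. f c \<noteq> None}"
      then obtain i where i: "f c = Some i" by auto
      then have iJ: "i \<in> J" unfolding J_def by (metis mem_Collect_eq rangeI)
      have "g i = c" using fg[OF iJ] i fi by (auto simp: inj_on_def)
      then show "c \<in> g ` J" using iJ by auto
    qed
  qed
  have "PhiM (J, g) = f"
  proof
    fix c
    show "PhiM (J, g) c = f c"
    proof (cases "c \<in> g ` J")
      case True
      then obtain a where a: "a \<in> J" "c = g a" by auto
      then show ?thesis using True ig fg by (simp add: inv_into_f_f PhiM_simp)
    next
      case False
      then show ?thesis using gJ by (auto simp: PhiM_simp)
    qed
  qed
  then show "PhiM (PsiM f) = f" by (simp add: Pf)
  have "J \<subseteq> K"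
  proof
    fix i assume "i \<in> J"
    then obtain c where "f c = Some i" by (auto simp: J_def)
    then show "i \<in> K" using fX[of c] by auto
  qed
  moreover have "g \<in> J \<rightarrow>\<^sub>E UNIV" by (auto simp: g_def J_def PiE_def extensional_def)
  ultimately show "PsiM f \<in> Sigma (Pow K) (\<lambda>J. {g\<in>J \<rightarrow>\<^sub>E (UNIV::'n set). inj_on g J})"
    using ig by (auto simp: Pf)
qed

lemma lemmaD:
  fixes u p :: "nat \<Rightarrow> 'k::field_char_0^'n"
  assumes finK: "finite K"
  shows "det (mat 1 + (\<Sum>i\<in>K. outer (u i) (p i))) = (\<Sum>J\<in>Pow K. detS J (\<lambda>a b. pairing (p a) (u b)))"
  unfolding det_side[OF finK] D_side[OF finK] match_sums[OF finK] ..

lemma wedge_detS: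
  fixes u p :: "nat \<Rightarrow> 'k::field^'n"
  assumes fJ: "finite J"
  shows "wedge_eval (map p (sorted_list_of_set J)) (map u (sorted_list_of_set J)) = detS J (\<lambda>a b. pairing (p a) (u b))"
proof -
  let ?sl = "sorted_list_of_set J"
  have bij: "bij_betw ((!) ?sl) {..<length ?sl} J"
    by (rule bij_betw_nth) (use fJ in auto)
  have "detS J (\<lambda>a b. pairing (p a) (u b)) = detS {..<length ?sl} (\<lambda>a b. pairing (p (?sl!a)) (u (?sl!b)))"
    by (rule detS_reindex[OF bij]) simp
  also have "\<dots> = wedge_eval (map p ?sl) (map u ?sl)"
    unfolding wedge_eval_def det_nat_detS length_map by (intro detS_cong) auto
  finally show ?thesis ..
qed

lemma detS_vanish:
  fixes u p :: "nat \<Rightarrow> 'k::field_char_0^'n"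
  assumes fJ: "finite J" and big: "card J > CARD('n)"
  shows "detS J (\<lambda>a b. pairing (p a) (u b)) = 0"
proof -
  have "detS J (\<lambda>a b. pairing (p a) (u b)) = detS J (\<lambda>a b. \<Sum>r\<in>UNIV. p a $ r * u b $ r)"
    by (simp add: pairing_def)
  also have "\<dots> = (\<Sum>g\<in>J \<rightarrow>\<^sub>E (UNIV::'n set). (\<Prod>a\<in>J. p a $ g a) * detS J (\<lambda>a b. u b $ g a))"
    by (rule detS_expand_rows[OF fJ finite])
  also have "\<dots> = 0"
  proof (rule sum.neutral, rule ballI)
    fix g :: "nat \<Rightarrow> 'n" assume "g \<in> J \<rightarrow>\<^sub>E (UNIV::'n set)"
    have "\<not> inj_on g J"
    proof
      assume "inj_on g J"
      then have "card J \<le> card (UNIV::'n set)" by (rule card_inj_on_le) auto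
      then show False using big by simp
    qed
    then obtain a a' where aa: "a \<in> J" "a' \<in> J" "a \<noteq> a'" "g a = g a'"
      unfolding inj_on_def by auto
    have "detS J (\<lambda>a b. u b $ g a) = 0"
      by (rule detS_eq_rows[OF fJ aa(1,2,3)]) (simp add: aa(4))
    then show "(\<Prod>a\<in>J. p a $ g a) * detS J (\<lambda>a b. u b $ g a) = 0" by simp
  qed
  finally show ?thesis .
qed

lemma detS_empty: "detS {} M = 1"
  by (simp add: detS_def)

lemma detS_single: "detS {a} M = M a a"
  by (simp add: detS_def)

lemma box_entry:
  fixes u p :: "nat \<Rightarrow> 'k::field^'n"
  assumes fJ: "finite J" and J0: "0 \<notin> J"
  shows "box (map (\<lambda>j. (u j, p j)) (sorted_list_of_set J)) $ r $ c =
    detS (insert 0 J) (\<lambda>a b. pairing ((p(0 := axis r 1)) a) ((u(0 := axis c 1)) b))"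
proof -
  let ?sl = "sorted_list_of_set J"
  have sl: "sorted_list_of_set (insert 0 J) = 0 # ?sl"
  proof -
    have "Min (insert 0 J) = 0" using fJ by (simp add: Min_insert2)
    moreover have "insert 0 J - {0} = J" using J0 by auto
    ultimately show ?thesis using sorted_list_of_set_nonempty[of "insert 0 J"] fJ by simp
  qed
  have mp: "map (p(0 := axis r 1)) ?sl = map p ?sl" "map (u(0 := axis c 1)) ?sl = map u ?sl"
    using J0 fJ by (auto intro!: map_cong)
  have "detS (insert 0 J) (\<lambda>a b. pairing ((p(0 := axis r 1)) a) ((u(0 := axis c 1)) b)) =
      wedge_eval (map (p(0 := axis r 1)) (0 # ?sl)) (map (u(0 := axis c 1)) (0 # ?sl))"
    using wedge_detS[of "insert 0 J" "p(0 := axis r 1)" "u(0 := axis c 1)"] fJ sl by simp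
  also have "\<dots> = wedge_eval (axis r 1 # map p ?sl) (axis c 1 # map u ?sl)"
    by (simp only: list.map fun_upd_same mp)
  also have "\<dots> = box (map (\<lambda>j. (u j, p j)) ?sl) $ r $ c"
    by (simp add: box_def o_def)
  finally show ?thesis ..
qed

lemma if_mult0: "(if P then a else 0) * (x::'k::comm_ring_1) = (if P then a * x else 0)"
  "x * (if P then a else 0) = (if P then x * a else 0)"
  by simp_all

lemma mat_scalar_mult: "(mat a ** M) $ i $ j = a * (M $ i $ j :: 'k::comm_ring_1)"
  by (simp add: matrix_matrix_mult_def mat_def if_mult0)

lemma matrix_mult_outer: "(M::'k::field^'n^'n) ** outer w q = outer (M *v w) q"
  by (simp add: vec_eq_iff matrix_matrix_mult_def matrix_vector_mult_def outer_def sum_distrib_right mult.assoc)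

lemma matrix_mult_sum: "finite K \<Longrightarrow> (M::'k::field^'n^'n) ** (\<Sum>i\<in>K. X i) = (\<Sum>i\<in>K. M ** X i)"
  by (induct K rule: finite_induct) (simp_all add: matrix_add_ldistrib)

lemma mv_axis: "((M::'k::field^'n^'n) *v axis c 1) $ r = M $ r $ c"
  by (simp add: matrix_vector_mult_def axis_def if_mult0)

lemma pairing_axis: "pairing (axis r 1) (x::'k::field^'n) = x $ r"
  by (simp add: pairing_def axis_def if_mult0)

lemma inv_props:
  fixes A :: "'k::field^'n^'n"
  assumes "invertible A"
  shows "A ** matrix_inv A = mat 1" "matrix_inv A ** A = mat 1"
proof -
  from assms obtain A' where "A ** A' = mat 1 \<and> A' ** A = mat 1" unfolding invertible_def by blast
  then have "A ** matrix_inv A = mat 1 \<and> matrix_inv A ** A = mat 1"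
    unfolding matrix_inv_def by (rule someI)
  then show "A ** matrix_inv A = mat 1" "matrix_inv A ** A = mat 1" by auto
qed

lemma inv_unique:
  fixes A Y :: "'k::field^'n^'n"
  assumes "invertible A" "A ** Y = mat 1"
  shows "matrix_inv A = Y"
proof -
  have "matrix_inv A = matrix_inv A ** (A ** Y)" using assms(2) by simp
  also have "\<dots> = Y" using inv_props(2)[OF assms(1)] by (simp add: matrix_mul_assoc)
  finally show ?thesis .
qed

lemma adj_entry:
  fixes u p :: "nat \<Rightarrow> 'k::field_char_0^'n"
  assumes finK: "finite K" and K0: "0 \<notin> K"
    and invA: "invertible (mat 1 + (\<Sum>i\<in>K. outer (u i) (p i)))"
  shows "(\<Sum>J\<in>Pow K. box (map (\<lambda>j. (u j, p j)) (sorted_list_of_set J))) $ r $ c =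
     det (mat 1 + (\<Sum>i\<in>K. outer (u i) (p i))) * matrix_inv (mat 1 + (\<Sum>i\<in>K. outer (u i) (p i))) $ r $ c"
proof -
  define A where "A = mat 1 + (\<Sum>i\<in>K. outer (u i) (p i))"
  define u' where "u' = u(0 := axis c 1)"
  define p' where "p' = p(0 := axis r 1)"
  have sumK: "(\<Sum>i\<in>insert 0 K. outer (u' i) (p' i)) = outer (axis c 1) (axis r 1) + (\<Sum>i\<in>K. outer (u i) (p i))"
  proof -
    have "(\<Sum>i\<in>K. outer (u' i) (p' i)) = (\<Sum>i\<in>K. outer (u i) (p i))"
      using K0 by (intro sum.cong refl) (auto simp: u'_def p'_def)
    then show ?thesis using finK K0 by (simp add: u'_def p'_def)
  qed
  have "det (A + outer (axis c 1) (axis r 1)) = det (mat 1 + (\<Sum>i\<in>insert 0 K. outer (u' i) (p' i)))"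
    by (simp add: sumK A_def algebra_simps)
  also have "\<dots> = (\<Sum>J\<in>Pow (insert 0 K). detS J (\<lambda>a b. pairing (p' a) (u' b)))"
    by (rule lemmaD) (use finK in simp)
  also have "\<dots> = (\<Sum>J\<in>Pow K. detS J (\<lambda>a b. pairing (p' a) (u' b))) + (\<Sum>J\<in>Pow K. detS (insert 0 J) (\<lambda>a b. pairing (p' a) (u' b)))"
  proof -
    have disj: "Pow K \<inter> insert 0 ` Pow K = {}" using K0 by auto
    have inj: "inj_on (insert 0) (Pow K)"
      using K0 by (auto simp: inj_on_def) (metis Diff_insert_absorb subset_iff)+
    show ?thesis
      unfolding Pow_insert using finK
      by (simp add: sum.union_disjoint disj sum.reindex[OF inj])
  qed
  also have "(\<Sum>J\<in>Pow K. detS J (\<lambda>a b. pairing (p' a) (u' b))) = (\<Sum>J\<in>Pow K. detS J (\<lambda>a b. pairing (p a) (u b)))"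
    using K0 by (intro sum.cong refl detS_cong) (auto simp: p'_def u'_def)
  also have "\<dots> = det A" unfolding A_def by (rule lemmaD[symmetric, OF finK])
  also have "(\<Sum>J\<in>Pow K. detS (insert 0 J) (\<lambda>a b. pairing (p' a) (u' b))) =
      (\<Sum>J\<in>Pow K. box (map (\<lambda>j. (u j, p j)) (sorted_list_of_set J))) $ r $ c"
    unfolding sum_component
  proof (intro sum.cong refl)
    fix J assume "J \<in> Pow K"
    then have fJ: "finite J" and J0: "0 \<notin> J" using K0 finK finite_subset by auto
    show "detS (insert 0 J) (\<lambda>a b. pairing (p' a) (u' b)) = box (map (\<lambda>j. (u j, p j)) (sorted_list_of_set J)) $ r $ c"
      unfolding p'_def u'_def by (rule box_entry[OF fJ J0, symmetric])
  qed
  finally have E1: "det (A + outer (axis c 1) (axis r 1)) = det A + (\<Sum>J\<in>Pow K. box (map (\<lambda>j. (u j, p j)) (sorted_list_of_set J))) $ r $ c" .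
  define w where "w = matrix_inv A *v axis c 1"
  have invA': "invertible A" using invA by (simp add: A_def)
  have "A ** (mat 1 + outer w (axis r 1)) = A + outer (axis c 1) (axis r 1)"
    by (simp add: matrix_add_ldistrib matrix_mult_outer w_def matrix_vector_mul_assoc inv_props[OF invA'])
  then have "det (A + outer (axis c 1) (axis r 1)) = det A * det (mat 1 + outer w (axis r 1))"
    by (metis det_mul)
  also have "det (mat 1 + outer w (axis r 1)) = det (mat 1 + (\<Sum>i\<in>{0::nat}. outer ((\<lambda>_. w) i) ((\<lambda>_. axis r 1) i)))"
    by simp
  also have "\<dots> = (\<Sum>J\<in>Pow {0::nat}. detS J (\<lambda>a b. pairing ((\<lambda>_. axis r 1) a) ((\<lambda>_. w) b)))"
    by (rule lemmaD) simp
  also have "\<dots> = 1 + w $ r"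
  proof -
    have P: "Pow {0::nat} = {{}, {0}}" by blast
    show ?thesis by (simp add: P detS_empty detS_single pairing_axis)
  qed
  also have "w $ r = matrix_inv A $ r $ c" by (simp add: w_def mv_axis)
  finally have E2: "det (A + outer (axis c 1) (axis r 1)) = det A * (1 + matrix_inv A $ r $ c)" .
  from E1 E2 show ?thesis unfolding A_def[symmetric] by (simp add: algebra_simps)
qed

lemma box_vanish:
  fixes u p :: "nat \<Rightarrow> 'k::field_char_0^'n"
  assumes fJ: "finite J" and J0: "0 \<notin> J" and big: "card J \<ge> CARD('n)"
  shows "box (map (\<lambda>j. (u j, p j)) (sorted_list_of_set J)) = 0"
proof -
  have "box (map (\<lambda>j. (u j, p j)) (sorted_list_of_set J)) $ r $ c = 0" for r c
  proof -
    have "card (insert 0 J) > CARD('n)" using fJ J0 big by simp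
    then show ?thesis unfolding box_entry[OF fJ J0] by (rule detS_vanish[rotated]) (use fJ in simp)
  qed
  then show ?thesis by (simp add: vec_eq_iff)
qed

lemma box_empty: "box ([] :: (('k::field^'n) \<times> ('k^'n)) list) = mat 1"
proof -
  have "box ([] :: (('k::field^'n) \<times> ('k^'n)) list) $ r $ c = mat 1 $ r $ c" for r c
    using box_entry[of "{}" "\<lambda>_. 0 :: 'k^'n" "\<lambda>_. 0 :: 'k^'n" r c]
    by (simp add: detS_single pairing_axis mat_def) (simp add: axis_def)
  then show ?thesis by (simp add: vec_eq_iff)
qed

lemma sum_restructure:
  fixes u p :: "nat \<Rightarrow> 'k::field_char_0^'n"
  shows "(\<Sum>J\<in>Pow {1..k}. box (map (\<lambda>j. (u j, p j)) (sorted_list_of_set J))) =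
    mat 1 + (\<Sum>i=1..min (CARD('n) - 1) k. \<Sum>J | J \<subseteq> {1..k} \<and> card J = i. box (map (\<lambda>j. (u j, p j)) (sorted_list_of_set J)))"
proof -
  define bx where "bx = (\<lambda>J. box (map (\<lambda>j. (u j, p j)) (sorted_list_of_set J)))"
  define m where "m = min (CARD('n) - 1) k"
  define S where "S = {J. J \<subseteq> {1..k} \<and> card J \<le> m}"
  have finS: "finite S" unfolding S_def by (rule finite_subset[of _ "Pow {1..k}"]) auto
  have "(\<Sum>J\<in>Pow {1..k}. bx J) = (\<Sum>J\<in>S. bx J)"
  proof (rule sum.mono_neutral_right)
    show "S \<subseteq> Pow {1..k}" by (auto simp: S_def)
    show "\<forall>J\<in>Pow {1..k} - S. bx J = 0"
    proof
      fix J assume J: "J \<in> Pow {1..k} - S"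
      then have fJ: "finite J" and J0: "0 \<notin> J" using finite_subset by auto
      have "card J \<le> k" using J card_mono[of "{1..k}" J] by auto
      then have "card J \<ge> CARD('n)" using J by (auto simp: S_def m_def)
      then show "bx J = 0" unfolding bx_def by (rule box_vanish[OF fJ J0])
    qed
  qed simp
  also have "\<dots> = (\<Sum>i\<in>{0..m}. \<Sum>J\<in>{J. J \<in> S \<and> card J = i}. bx J)"
    by (rule sum.group[symmetric]) (use finS in \<open>auto simp: S_def\<close>)
  also have "\<dots> = (\<Sum>J\<in>{J. J \<in> S \<and> card J = 0}. bx J) + (\<Sum>i\<in>{1..m}. \<Sum>J\<in>{J. J \<in> S \<and> card J = i}. bx J)"
    by (subst sum.atLeast_Suc_atMost) simp_all
  also have "{J. J \<in> S \<and> card J = 0} = {{}}"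
  proof -
    have "J = {}" if "J \<subseteq> {1..k}" "card J = 0" for J :: "nat set"
      using that finite_subset[OF that(1)] by simp
    then show ?thesis by (auto simp: S_def)
  qed
  also have "(\<Sum>i\<in>{1..m}. \<Sum>J\<in>{J. J \<in> S \<and> card J = i}. bx J) = (\<Sum>i\<in>{1..m}. \<Sum>J | J \<subseteq> {1..k} \<and> card J = i. bx J)"
    by (intro sum.cong refl arg_cong[where f="\<lambda>X. sum bx X"]) (auto simp: S_def)
  finally show ?thesis by (simp add: bx_def m_def box_empty)
qed

lemma matrix_add_rdistrib': "((B + C) ** (A::'k::comm_ring_1^'n^'n)) = (B ** A) + (C ** A)"
  by (simp add: vec_eq_iff matrix_matrix_mult_def distrib_right sum.distrib)

lemma main_gen:
  fixes B :: "'k::field_char_0^'n^'n" and v p :: "nat \<Rightarrow> 'k^'n" and k :: nat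
  shows
  "let B' = B + (\<Sum>i=1..k. outer (v i) (p i));
          u = (\<lambda>i. matrix_inv B *v v i);
          A = mat 1 + (\<Sum>i=1..k. outer (u i) (p i))
      in invertible B \<and> det A \<noteq> 0 \<longrightarrow>
         invertible B' \<and>
         matrix_inv B' = mat (1 / det A) ** matrix_inv B
           + mat (1 / det A) ** ((\<Sum>i=1..min (CARD('n) - 1) k.
                 \<Sum>J | J \<subseteq> {1..k} \<and> card J = i.
                   box (map (\<lambda>j. (u j, p j)) (sorted_list_of_set J))) ** matrix_inv B)"
proof -
  define u where "u = (\<lambda>i. matrix_inv B *v v i)"
  define A where "A = mat 1 + (\<Sum>i=1..k. outer (u i) (p i))"
  define B' where "B' = B + (\<Sum>i=1..k. outer (v i) (p i))"
  define S where "S = (\<Sum>i=1..min (CARD('n) - 1) k.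
                 \<Sum>J | J \<subseteq> {1..k} \<and> card J = i.
                   box (map (\<lambda>j. (u j, p j)) (sorted_list_of_set J)))"
  have "invertible B' \<and> matrix_inv B' = mat (1 / det A) ** matrix_inv B + mat (1 / det A) ** (S ** matrix_inv B)"
    if invB: "invertible B" and dA: "det A \<noteq> 0"
  proof -
    have invA: "invertible A" using dA by (simp add: invertible_det_nz)
    have Bu: "B *v u i = v i" for i
      by (simp add: u_def matrix_vector_mul_assoc inv_props[OF invB])
    have BA: "B ** A = B'"
      by (simp add: A_def B'_def matrix_add_ldistrib matrix_mult_sum matrix_mult_outer Bu)
    have dB: "det B \<noteq> 0" using invB by (simp add: invertible_det_nz)
    have invB': "invertible B'"
      unfolding invertible_det_nz BA[symmetric] det_mul using dA dB by simp
    have "B' ** (matrix_inv A ** matrix_inv B) = mat 1"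
      unfolding BA[symmetric]
      by (metis inv_props(1) invA invB matrix_mul_assoc matrix_mul_lid)
    then have iB': "matrix_inv B' = matrix_inv A ** matrix_inv B"
      by (rule inv_unique[OF invB'])
    have T: "(\<Sum>J\<in>Pow {1..k}. box (map (\<lambda>j. (u j, p j)) (sorted_list_of_set J))) $ r $ c = det A * matrix_inv A $ r $ c" for r c
      unfolding A_def
      by (rule adj_entry) (use invA in \<open>simp_all add: A_def atLeastAtMost_iff\<close>)
    have "matrix_inv A = mat (1 / det A) ** (\<Sum>J\<in>Pow {1..k}. box (map (\<lambda>j. (u j, p j)) (sorted_list_of_set J)))"
    proof -
      have "matrix_inv A $ r $ c = (mat (1 / det A) ** (\<Sum>J\<in>Pow {1..k}. box (map (\<lambda>j. (u j, p j)) (sorted_list_of_set J)))) $ r $ c" for r c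
        unfolding mat_scalar_mult T using dA by simp
      then show ?thesis by (simp add: vec_eq_iff)
    qed
    also have "\<dots> = mat (1 / det A) ** (mat 1 + S)"
      unfolding S_def sum_restructure ..
    finally have iA: "matrix_inv A = mat (1 / det A) ** (mat 1 + S)" .
    have "matrix_inv B' = mat (1 / det A) ** matrix_inv B + mat (1 / det A) ** (S ** matrix_inv B)"
      unfolding iB' iA
      by (simp add: matrix_add_ldistrib matrix_add_rdistrib' matrix_mul_assoc)
    then show ?thesis using invB' by simp
  qed
  then show ?thesis unfolding Let_def u_def[symmetric] A_def[symmetric] B'_def[symmetric] S_def[symmetric]
    by blast
qed


theorem mainTheorem2:
  shows
  "(\<forall>(B::real^'n^'n) (v::nat \<Rightarrow> real^'n) (p::nat \<Rightarrow> real^'n) (k::nat).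
      let B' = B + (\<Sum>i=1..k. outer (v i) (p i));
          u = (\<lambda>i. matrix_inv B *v v i);
          A = mat 1 + (\<Sum>i=1..k. outer (u i) (p i))
      in invertible B \<and> det A \<noteq> 0 \<longrightarrow>
         invertible B' \<and>
         matrix_inv B' = mat (1 / det A) ** matrix_inv B
           + mat (1 / det A) ** ((\<Sum>i=1..min (CARD('n) - 1) k.
                 \<Sum>J | J \<subseteq> {1..k} \<and> card J = i.
                   box (map (\<lambda>j. (u j, p j)) (sorted_list_of_set J))) ** matrix_inv B))
   \<and>
   (\<forall>(B::complex^'n^'n) (v::nat \<Rightarrow> complex^'n) (p::nat \<Rightarrow> complex^'n) (k::nat).
      let B' = B + (\<Sum>i=1..k. outer (v i) (p i));
          u = (\<lambda>i. matrix_inv B *v v i);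
          A = mat 1 + (\<Sum>i=1..k. outer (u i) (p i))
      in invertible B \<and> det A \<noteq> 0 \<longrightarrow>
         invertible B' \<and>
         matrix_inv B' = mat (1 / det A) ** matrix_inv B
           + mat (1 / det A) ** ((\<Sum>i=1..min (CARD('n) - 1) k.
                 \<Sum>J | J \<subseteq> {1..k} \<and> card J = i.
                   box (map (\<lambda>j. (u j, p j)) (sorted_list_of_set J))) ** matrix_inv B))"
proof (intro conjI allI)
  fix B :: "real^'n^'n" and v p :: "nat \<Rightarrow> real^'n" and k :: nat
  show "let B' = B + (\<Sum>i=1..k. outer (v i) (p i));
          u = (\<lambda>i. matrix_inv B *v v i);
          A = mat 1 + (\<Sum>i=1..k. outer (u i) (p i))
      in invertible B \<and> det A \<noteq> 0 \<longrightarrow>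
         invertible B' \<and>
         matrix_inv B' = mat (1 / det A) ** matrix_inv B
           + mat (1 / det A) ** ((\<Sum>i=1..min (CARD('n) - 1) k.
                 \<Sum>J | J \<subseteq> {1..k} \<and> card J = i.
                   box (map (\<lambda>j. (u j, p j)) (sorted_list_of_set J))) ** matrix_inv B)"
    by (rule main_gen)
next
  fix B :: "complex^'n^'n" and v p :: "nat \<Rightarrow> complex^'n" and k :: nat
  show "let B' = B + (\<Sum>i=1..k. outer (v i) (p i));
          u = (\<lambda>i. matrix_inv B *v v i);
          A = mat 1 + (\<Sum>i=1..k. outer (u i) (p i))
      in invertible B \<and> det A \<noteq> 0 \<longrightarrow>
         invertible B' \<and>
         matrix_inv B' = mat (1 / det A) ** matrix_inv B
           + mat (1 / det A) ** ((\<Sum>i=1..min (CARD('n) - 1) k.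
                 \<Sum>J | J \<subseteq> {1..k} \<and> card J = i.
                   box (map (\<lambda>j. (u j, p j)) (sorted_list_of_set J))) ** matrix_inv B)"
    by (rule main_gen)
qed

end
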